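(* Let $(R,\mathfrak{m},k)$ be a Noetherian local ring and let $I,J$ be ideals of $R$ such that $J\mathfrak{m}\not\subseteq I\mathfrak{m}$. Then $I+J\mathfrak{m}$ is a Burch ideal. In particular, if $\dim R/I>0$ and $\dim R/J=0$, then $I+J\mathfrak{m}$ is a Burch ideal.
   Context: An ideal $L$ of a local ring $(R,\mathfrak{m})$ is called Burch if $L\mathfrak{m}:\mathfrak{m}\neq L:\mathfrak{m}$ (equivalently, $L\mathfrak{m}\neq (L:\mathfrak{m})\mathfrak{m}$). Here $A:B=\{r\in R: rB\subseteq A\}$. *)

theory Defs
  imports "HOL-Algebra.Ideal_Product" "HOL-Algebra.QuotRing" "HOL-Algebra.Ring_Divisibility"
    "HOL-Library.Extended_Real"
begin

definition local_ring :: "('a, 'b) ring_scheme \<Rightarrow> 'a set \<Rightarrow> bool" where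
  "local_ring R m \<longleftrightarrow> cring R \<and> maximalideal m R \<and> (\<forall>n. maximalideal n R \<longrightarrow> n = m)"

definition ideal_colon :: "('a, 'b) ring_scheme \<Rightarrow> 'a set \<Rightarrow> 'a set \<Rightarrow> 'a set" where
  "ideal_colon R A B = {r \<in> carrier R. \<forall>b\<in>B. r \<otimes>\<^bsub>R\<^esub> b \<in> A}"

definition burch_ideal :: "('a, 'b) ring_scheme \<Rightarrow> 'a set \<Rightarrow> 'a set \<Rightarrow> bool" where
  "burch_ideal R m L \<longleftrightarrow> ideal_colon R (ideal_prod R L m) m \<noteq> ideal_colon R L m"

(* Krull dimension: supremum of lengths n of chains P_0 \<subset> ... \<subset> P_n of prime ideals;
   the zero ring (no prime ideals) has dimension -\<infinity> (Sup of the empty set). *)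
definition krull_dim :: "('a, 'b) ring_scheme \<Rightarrow> ereal" where
  "krull_dim R = Sup {ereal (real n) | n. \<exists>P :: nat \<Rightarrow> 'a set.
      (\<forall>i\<le>n. primeideal (P i) R) \<and> (\<forall>i<n. P i \<subset> P (Suc i))}"

end

theory Submission
  imports Defs
begin

lemma noeth_max:
  assumes "noetherian_ring R" "F \<subseteq> {I. ideal I R}" "F \<noteq> {}"
  shows "\<exists>M\<in>F. \<forall>X\<in>F. M \<subseteq> X \<longrightarrow> X = M"
proof (rule subset_Zorn_nonempty[OF assms(3)])
  fix C assume C: "C \<noteq> {}" "subset.chain F C"
  have CF: "C \<subseteq> F" using C(2) by (simp add: pred_on.chain_def)
  hence "C \<subseteq> {I. ideal I R}" using assms(2) by (rule subset_trans)
  hence "subset.chain {I. ideal I R} C" using C(2) by (simp add: pred_on.chain_def)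
  hence "\<Union>C \<in> C" by (rule noetherian_ring.ideal_chain_is_trivial[OF assms(1) C(1)])
  thus "\<Union>C \<in> F" by (rule subsetD[OF CF])
qed

lemma local_proper_sub:
  assumes "noetherian_ring R" "local_ring R m" "ideal A R" "A \<noteq> carrier R"
  shows "A \<subseteq> m"
proof -
  let ?F = "{B. ideal B R \<and> A \<subseteq> B \<and> B \<noteq> carrier R}"
  obtain M where M: "M \<in> ?F" "\<forall>X\<in>?F. M \<subseteq> X \<longrightarrow> X = M"
    using noeth_max[OF assms(1), of ?F] assms(3,4) by blast
  have "maximalideal M R"
  proof (rule maximalidealI)
    show "ideal M R" "carrier R \<noteq> M" using M(1) by auto
    fix J assume J: "ideal J R" "M \<subseteq> J" "J \<subseteq> carrier R"
    show "J = M \<or> J = carrier R"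
    proof (cases "J = carrier R")
      case False
      hence "J \<in> ?F" using J M(1) by blast
      thus ?thesis using M(2) J(2) by blast
    qed simp
  qed
  hence "M = m" using assms(2) unfolding local_ring_def by blast
  thus ?thesis using M by blast
qed

lemma colon_elem_ideal:
  fixes R (structure)
  assumes "cring R" "ideal L R" "x \<in> carrier R"
  shows "ideal {a \<in> carrier R. a \<otimes>\<^bsub>R\<^esub> x \<in> L} R"
proof -
  interpret cring R by fact
  interpret L: ideal L R by fact
  show ?thesis
  proof (rule idealI[OF ring_axioms])
    show "subgroup {a \<in> carrier R. a \<otimes> x \<in> L} (add_monoid R)"
    proof (rule add.subgroupI)
      have "\<zero> \<in> {a \<in> carrier R. a \<otimes> x \<in> L}" using assms(3) by (simp add: L.zero_closed)
      thus "{a \<in> carrier R. a \<otimes> x \<in> L} \<noteq> {}" by blast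
    next
      fix a assume "a \<in> {a \<in> carrier R. a \<otimes> x \<in> L}"
      thus "\<ominus> a \<in> {a \<in> carrier R. a \<otimes> x \<in> L}"
        using assms(3) by (simp add: l_minus L.a_inv_closed)
    next
      fix a b assume "a \<in> {a \<in> carrier R. a \<otimes> x \<in> L}" "b \<in> {a \<in> carrier R. a \<otimes> x \<in> L}"
      thus "a \<oplus> b \<in> {a \<in> carrier R. a \<otimes> x \<in> L}"
        using assms(3) by (simp add: l_distr L.a_closed)
    qed auto
  next
    fix a y assume a: "a \<in> {a \<in> carrier R. a \<otimes> x \<in> L}" and y: "y \<in> carrier R"
    have "y \<otimes> (a \<otimes> x) \<in> L" using a y L.I_l_closed by blast
    moreover have "(y \<otimes> a) \<otimes> x = y \<otimes> (a \<otimes> x)" "(a \<otimes> y) \<otimes> x = y \<otimes> (a \<otimes> x)"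
      using a y assms(3) by (simp_all add: m_assoc m_lcomm)
    ultimately show "y \<otimes> a \<in> {a \<in> carrier R. a \<otimes> x \<in> L}"
      "a \<otimes> y \<in> {a \<in> carrier R. a \<otimes> x \<in> L}"
      using a y by auto
  qed
qed


lemma local_unit_trick:
  fixes R (structure)
  assumes "noetherian_ring R" "local_ring R m" "ideal L R" "x \<in> carrier R" "r \<in> m"
    and "x \<ominus> r \<otimes> x \<in> L"
  shows "x \<in> L"
proof (rule ccontr)
  assume nx: "x \<notin> L"
  interpret cring R using assms(2) unfolding local_ring_def by blast
  interpret m: maximalideal m R using assms(2) unfolding local_ring_def by blast
  let ?C = "{a \<in> carrier R. a \<otimes> x \<in> L}"
  have C: "ideal ?C R" using colon_elem_ideal[OF is_cring assms(3,4)] .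
  have "\<one> \<notin> ?C" using nx assms(4) by simp
  hence "?C \<noteq> carrier R" by auto
  hence Cm: "?C \<subseteq> m" using local_proper_sub[OF assms(1,2) C] by blast
  have rc: "r \<in> carrier R" using assms(5) m.Icarr by blast
  have "(\<one> \<ominus> r) \<otimes> x = x \<ominus> r \<otimes> x"
    using rc assms(4) by (simp add: minus_eq l_distr l_minus)
  hence "\<one> \<ominus> r \<in> ?C" using assms(6) rc by simp
  hence "\<one> \<ominus> r \<in> m" using Cm by blast
  hence "(\<one> \<ominus> r) \<oplus> r \<in> m" using assms(5) m.a_closed by blast
  moreover have "(\<one> \<ominus> r) \<oplus> r = \<one>" using rc by (simp add: minus_eq a_assoc l_neg)
  ultimately have "\<one> \<in> m" by simp
  hence "m = carrier R" using m.one_imp_carrier by blast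
  thus False using m.I_notcarr by simp
qed

lemma set_add_left_sub:
  fixes R (structure)
  assumes "ring R" "ideal K R" "ideal N R"
  shows "K \<subseteq> K <+>\<^bsub>R\<^esub> N"
proof
  interpret ring R by fact
  fix k assume k: "k \<in> K"
  have z: "\<zero> \<in> N" using additive_subgroup.zero_closed[OF ideal.axioms(1)[OF assms(3)]] .
  have "k \<oplus> \<zero> \<in> K <+>\<^bsub>R\<^esub> N" using k z unfolding set_add_def' by blast
  thus "k \<in> K <+>\<^bsub>R\<^esub> N" using ideal.Icarr[OF assms(2) k] by simp
qed

lemma set_add_right_sub:
  fixes R (structure)
  assumes "ring R" "ideal K R" "ideal N R"
  shows "N \<subseteq> K <+>\<^bsub>R\<^esub> N"
proof
  interpret ring R by fact
  fix k assume k: "k \<in> N"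
  have z: "\<zero> \<in> K" using additive_subgroup.zero_closed[OF ideal.axioms(1)[OF assms(2)]] .
  have "\<zero> \<oplus> k \<in> K <+>\<^bsub>R\<^esub> N" using k z unfolding set_add_def' by blast
  thus "k \<in> K <+>\<^bsub>R\<^esub> N" using ideal.Icarr[OF assms(3) k] by simp
qed

lemma set_add_least:
  fixes R (structure)
  assumes "ring R" "ideal L R" "K \<subseteq> L" "N \<subseteq> L"
  shows "K <+>\<^bsub>R\<^esub> N \<subseteq> L"
proof
  fix y assume "y \<in> K <+>\<^bsub>R\<^esub> N"
  then obtain a b where ab: "a \<in> K" "b \<in> N" "y = a \<oplus> b" unfolding set_add_def' by blast
  have "a \<oplus> b \<in> L"
    using additive_subgroup.a_closed[OF ideal.axioms(1)[OF assms(2)]] ab(1,2) assms(3,4) by blast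
  thus "y \<in> L" using ab(3) by simp
qed

lemma prod_PIdl_char:
  fixes R (structure)
  assumes "cring R" "ideal A R" "x \<in> carrier R" "y \<in> ideal_prod R A (PIdl x)"
  shows "\<exists>r\<in>A. y = r \<otimes> x"
  using assms(4)
proof (induct rule: ideal_prod.induct)
  interpret cring R by fact
  case (prod i j)
  from prod(2) obtain c where c: "c \<in> carrier R" "j = c \<otimes> x" unfolding cgenideal_def by auto
  have ic: "i \<in> carrier R" using ideal.Icarr[OF assms(2) prod(1)] .
  have "i \<otimes> j = (i \<otimes> c) \<otimes> x" unfolding c(2) using c(1) ic assms(3) by (simp add: m_assoc)
  moreover have "i \<otimes> c \<in> A" using ideal.I_r_closed[OF assms(2) prod(1) c(1)] .
  ultimately show ?case by (intro bexI)
next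
  interpret cring R by fact
  case (sum s1 s2)
  from sum(2) obtain r1 where r1: "r1 \<in> A" "s1 = r1 \<otimes> x" by (elim bexE)
  from sum(4) obtain r2 where r2: "r2 \<in> A" "s2 = r2 \<otimes> x" by (elim bexE)
  have rc: "r1 \<in> carrier R" "r2 \<in> carrier R" using r1(1) r2(1) ideal.Icarr[OF assms(2)] by auto
  have "(r1 \<oplus> r2) \<otimes> x = r1 \<otimes> x \<oplus> r2 \<otimes> x"
    by (rule l_distr[OF rc assms(3)])
  hence "s1 \<oplus> s2 = (r1 \<oplus> r2) \<otimes> x" unfolding r1(2) r2(2) by (rule sym)
  moreover have "r1 \<oplus> r2 \<in> A"
    using additive_subgroup.a_closed[OF ideal.axioms(1)[OF assms(2)] r1(1) r2(1)] .
  ultimately show ?case by (intro bexI)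
qed

lemma nakayama_local:
  fixes R (structure)
  assumes noeth: "noetherian_ring R" and loc: "local_ring R m" and K: "ideal K R" and N: "ideal N R"
    and sub: "N \<subseteq> K <+>\<^bsub>R\<^esub> ideal_prod R N m"
  shows "N \<subseteq> K"
proof (rule ccontr)
  assume nsub: "\<not> N \<subseteq> K"
  interpret cring R using loc unfolding local_ring_def by blast
  interpret m: maximalideal m R using loc unfolding local_ring_def by blast
  have mid: "ideal m R" by (rule m.is_ideal)
  let ?S = "K <+>\<^bsub>R\<^esub> N"
  have S: "ideal ?S R" using add_ideals[OF K N] .
  have KS: "K \<subseteq> ?S" using set_add_left_sub[OF ring_axioms K N] .
  have NS: "N \<subseteq> ?S" using set_add_right_sub[OF ring_axioms K N] .
  let ?F = "{B. ideal B R \<and> K \<subseteq> B \<and> B \<subseteq> ?S \<and> B \<noteq> ?S}"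
  have "K \<noteq> ?S" using NS nsub by blast
  hence "K \<in> ?F" using K KS by blast
  hence Fne: "?F \<noteq> {}" by (rule ex_in_conv[THEN iffD1, OF exI])
  have Fsub: "?F \<subseteq> {I. ideal I R}" by (rule subsetI) simp
  have "\<exists>M\<in>?F. \<forall>X\<in>?F. M \<subseteq> X \<longrightarrow> X = M" by (rule noeth_max[OF noeth Fsub Fne])
  then obtain L where L: "L \<in> ?F" "\<forall>X\<in>?F. L \<subseteq> X \<longrightarrow> X = L"
    by (rule bexE)
  have Lid: "ideal L R" and KL: "K \<subseteq> L" and LS: "L \<subseteq> ?S" and LnS: "L \<noteq> ?S" using L(1) by auto
  obtain x where x: "x \<in> ?S" "x \<notin> L" using LS LnS by blast
  have xc: "x \<in> carrier R" using x(1) ideal.Icarr[OF S] by blast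
  have Px: "ideal (PIdl x) R" using cgenideal_ideal[OF xc] .
  have xPx: "x \<in> PIdl x" using xc unfolding cgenideal_def by (intro CollectI exI[of _ \<one>]) simp
  let ?P = "ideal_prod R m (PIdl x)"
  have Pid: "ideal ?P R" using ideal_prod_is_ideal[OF mid Px] .
  let ?B = "L <+>\<^bsub>R\<^esub> ?P"
  have Bid: "ideal ?B R" using add_ideals[OF Lid Pid] .
  have PS: "?P \<subseteq> ?S"
  proof
    fix y assume "y \<in> ?P"
    then obtain r where r: "r \<in> m" "y = r \<otimes> x" using prod_PIdl_char[OF is_cring mid xc] by blast
    thus "y \<in> ?S" using ideal.I_l_closed[OF S x(1)] m.Icarr by blast
  qed
  have BS: "?B \<subseteq> ?S" using set_add_least[OF ring_axioms S LS PS] .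
  have LB: "L \<subseteq> ?B" using set_add_left_sub[OF ring_axioms Lid Pid] .
  have BnS: "?B \<noteq> ?S"
  proof
    assume "?B = ?S"
    hence "x \<in> ?B" using x by simp
    then obtain l y where ly: "l \<in> L" "y \<in> ?P" "x = l \<oplus> y" unfolding set_add_def' by blast
    then obtain r where r: "r \<in> m" "y = r \<otimes> x" using prod_PIdl_char[OF is_cring mid xc] by blast
    have lc: "l \<in> carrier R" using ideal.Icarr[OF Lid ly(1)] .
    have yc: "y \<in> carrier R" using ideal.Icarr[OF Pid ly(2)] .
    have "x \<ominus> y = l" using ly(3) lc yc by (simp add: minus_eq a_assoc r_neg)
    hence "x \<ominus> r \<otimes> x \<in> L" using ly(1) r(2) by simp
    hence "x \<in> L" using local_unit_trick[OF noeth loc Lid xc r(1)] by blast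
    thus False using x(2) by simp
  qed
  have "?B \<in> ?F" using Bid KL LB BS BnS by blast
  hence BL: "?B = L" using L(2) LB by blast
  have mxL: "r \<otimes> x \<in> L" if r: "r \<in> m" for r
  proof -
    have "r \<otimes> x \<in> ?P" using ideal_prod.prod[OF r xPx] .
    hence "r \<otimes> x \<in> ?B" using set_add_right_sub[OF ring_axioms Lid Pid] by blast
    thus ?thesis using BL by simp
  qed
  let ?B2 = "L <+>\<^bsub>R\<^esub> PIdl x"
  have B2id: "ideal ?B2 R" using add_ideals[OF Lid Px] .
  have PxS: "PIdl x \<subseteq> ?S" using ideal.I_l_closed[OF S x(1)] unfolding cgenideal_def by blast
  have B2S: "?B2 \<subseteq> ?S" using set_add_least[OF ring_axioms S LS PxS] .
  have LB2: "L \<subseteq> ?B2" using set_add_left_sub[OF ring_axioms Lid Px] .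
  have "x \<in> ?B2" using xPx set_add_right_sub[OF ring_axioms Lid Px] by blast
  hence "?B2 \<noteq> L" using x(2) by blast
  hence "?B2 \<notin> ?F" using L(2) LB2 by blast
  hence B2eq: "?B2 = ?S" using B2id KL LB2 B2S by blast
  have mS: "r \<otimes> y \<in> L" if r: "r \<in> m" and y: "y \<in> ?S" for r y
  proof -
    have "y \<in> ?B2" using y B2eq by simp
    then obtain l z where lz: "l \<in> L" "z \<in> PIdl x" "y = l \<oplus> z" unfolding set_add_def' by blast
    then obtain a where a: "a \<in> carrier R" "z = a \<otimes> x" unfolding cgenideal_def by blast
    have rc: "r \<in> carrier R" using r m.Icarr by blast
    have lc: "l \<in> carrier R" using ideal.Icarr[OF Lid lz(1)] .
    have "r \<otimes> y = r \<otimes> l \<oplus> (r \<otimes> a) \<otimes> x"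
      using lz(3) a rc lc xc by (simp add: r_distr m_assoc)
    moreover have "r \<otimes> l \<in> L" using ideal.I_l_closed[OF Lid lz(1) rc] .
    moreover have "(r \<otimes> a) \<otimes> x \<in> L" using mxL m.I_r_closed[OF r a(1)] by blast
    ultimately show ?thesis using Lid ideal.axioms(1) additive_subgroup.a_closed by metis
  qed
  have NmL: "ideal_prod R N m \<subseteq> L"
  proof
    fix y assume "y \<in> ideal_prod R N m"
    thus "y \<in> L"
    proof (induct rule: ideal_prod.induct)
      case (prod i j)
      have "i \<otimes> j = j \<otimes> i" using ideal.Icarr[OF N prod(1)] m.Icarr[OF prod(2)] by (simp add: m_comm)
      thus ?case using mS[OF prod(2)] NS prod(1) by auto
    next
      case (sum s1 s2)
      thus ?case using Lid ideal.axioms(1) additive_subgroup.a_closed by metis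
    qed
  qed
  have "N \<subseteq> L" using sub set_add_least[OF ring_axioms Lid KL NmL] by blast
  hence "?S \<subseteq> L" using set_add_least[OF ring_axioms Lid KL] by blast
  thus False using LS LnS by blast
qed


lemma quot_carrier_elem:
  fixes R (structure)
  assumes "ideal J R" "X \<in> carrier (R Quot J)"
  obtains a where "a \<in> carrier R" "X = J +> a"
  using assms(2) unfolding FactRing_def A_RCOSETS_def'[of R J] by auto

lemma prime_img:
  fixes R (structure)
  assumes cr: "cring R" and J: "ideal J R" and P: "primeideal P R" and JP: "J \<subseteq> P"
  shows "primeideal ((+>) J ` P) (R Quot J)"
proof -
  interpret cring R by fact
  interpret P: primeideal P R by fact
  have Pid: "ideal P R" by (rule P.is_ideal)
  have Iq: "ideal ((+>) J ` P) (R Quot J)" using ring_ideal_imp_quot_ideal[OF J Pid] .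
  have Isub: "(+>) J ` P \<subseteq> carrier (R Quot J)"
    using Iq ideal.axioms(1) additive_subgroup.a_subset by blast
  have UP: "\<Union> ((+>) J ` P) = P" using ideal_incl_iff[OF J Pid] JP by simp
  have mem: "(a \<in> P) = (J +> a \<in> (+>) J ` P)" if "a \<in> carrier R" for a
    using canonical_proj_vimage_mem_iff[OF J Isub that] UP by simp
  show ?thesis
  proof (rule primeidealI[OF Iq ideal.quotient_is_cring[OF J is_cring]])
    show "carrier (R Quot J) \<noteq> (+>) J ` P"
    proof
      assume eq: "carrier (R Quot J) = (+>) J ` P"
      have "J +> \<one> \<in> carrier (R Quot J)"
        unfolding FactRing_def A_RCOSETS_def'[of R J] by auto
      hence "\<one> \<in> P" using mem[of \<one>] eq by simp
      hence "P = carrier R" by (rule P.one_imp_carrier)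
      thus False using P.I_notcarr by simp
    qed
  next
    fix a b assume a: "a \<in> carrier (R Quot J)" and b: "b \<in> carrier (R Quot J)"
      and ab: "a \<otimes>\<^bsub>R Quot J\<^esub> b \<in> (+>) J ` P"
    obtain x where x: "x \<in> carrier R" "a = J +> x" using quot_carrier_elem[OF J a] by blast
    obtain y where y: "y \<in> carrier R" "b = J +> y" using quot_carrier_elem[OF J b] by blast
    have "a \<otimes>\<^bsub>R Quot J\<^esub> b = J +> (x \<otimes> y)"
      unfolding FactRing_def using x y ideal.rcoset_mult_add[OF J] by simp
    hence "x \<otimes> y \<in> P" using mem[of "x \<otimes> y"] ab x(1) y(1) by simp
    hence "x \<in> P \<or> y \<in> P" using P.I_prime x(1) y(1) by blast
    thus "a \<in> (+>) J ` P \<or> b \<in> (+>) J ` P" using x y by blast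
  qed
qed

lemma prime_vimage:
  fixes R (structure)
  assumes cr: "cring R" and I: "ideal I R" and Q: "primeideal Q (R Quot I)"
  shows "primeideal {r \<in> carrier R. I +> r \<in> Q} R" and "I \<subseteq> {r \<in> carrier R. I +> r \<in> Q}"
proof -
  interpret cring R by fact
  show "primeideal {r \<in> carrier R. I +> r \<in> Q} R"
    using ring_hom_ring.primeideal_vimage[OF ideal.rcos_ring_hom_ring[OF I] is_cring Q] .
  have "I \<in> Q" using Q primeideal.axioms(1) ideal.axioms(1) additive_subgroup.zero_closed
    unfolding FactRing_def by fastforce
  thus "I \<subseteq> {r \<in> carrier R. I +> r \<in> Q}"
    using a_rcos_zero[OF I] ideal.Icarr[OF I] by auto
qed

lemma vimage_strict:
  fixes R (structure)
  assumes "ideal I R" "Q0 \<subset> Q1" "Q1 \<subseteq> carrier (R Quot I)"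
  shows "{r \<in> carrier R. I +> r \<in> Q0} \<noteq> {r \<in> carrier R. I +> r \<in> Q1}"
proof
  assume eq: "{r \<in> carrier R. I +> r \<in> Q0} = {r \<in> carrier R. I +> r \<in> Q1}"
  have "Q1 \<subseteq> Q0"
  proof
    fix X assume X: "X \<in> Q1"
    then obtain a where a: "a \<in> carrier R" "X = I +> a" using quot_carrier_elem[OF assms(1)] assms(3) by blast
    hence "a \<in> {r \<in> carrier R. I +> r \<in> Q1}" using X by simp
    hence "a \<in> {r \<in> carrier R. I +> r \<in> Q0}" using eq by simp
    thus "X \<in> Q0" using a by simp
  qed
  thus False using assms(2) by blast
qed

lemma primes_over_I_eq_m:
  fixes R (structure)
  assumes noeth: "noetherian_ring R" and loc: "local_ring R m" and I: "ideal I R" and J: "ideal J R"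
    and JmIm: "ideal_prod R J m \<subseteq> ideal_prod R I m"
    and d0: "krull_dim (R Quot J) = 0"
    and P: "primeideal P R" and IP: "I \<subseteq> P"
  shows "P = m"
proof -
  interpret cring R using loc unfolding local_ring_def by blast
  interpret m: maximalideal m R using loc unfolding local_ring_def by blast
  interpret P: primeideal P R by fact
  have mid: "ideal m R" by (rule m.is_ideal)
  have mprime: "primeideal m R" using maximalideal_prime[OF m.is_maximalideal] .
  have "ideal_prod R I m \<subseteq> I" using ideal_prod_inter[OF I mid] by blast
  hence JmP: "ideal_prod R J m \<subseteq> P" using JmIm IP by blast
  have Pm: "P \<subseteq> m" using local_proper_sub[OF noeth loc P.is_ideal] P.I_notcarr by auto
  show ?thesis
  proof (rule ccontr)
    assume Pne: "P \<noteq> m"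
    then obtain x where x: "x \<in> m" "x \<notin> P" using Pm by blast
    have JP: "J \<subseteq> P"
    proof
      fix j assume j: "j \<in> J"
      have "j \<otimes> x \<in> P" using ideal_prod.prod[OF j x(1)] JmP by blast
      thus "j \<in> P" using P.I_prime ideal.Icarr[OF J j] m.Icarr[OF x(1)] x(2) by blast
    qed
    have Jm: "J \<subseteq> m" using JP Pm by blast
    let ?Q = "\<lambda>i::nat. if i = 0 then (+>) J ` P else (+>) J ` m"
    have UP: "\<Union> ((+>) J ` P) = P" using ideal_incl_iff[OF J P.is_ideal] JP by simp
    have Um: "\<Union> ((+>) J ` m) = m" using ideal_incl_iff[OF J mid] Jm by simp
    have pr: "primeideal (?Q i) (R Quot J)" for i
      using prime_img[OF is_cring J P JP] prime_img[OF is_cring J mprime Jm] by simp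
    have s1: "(+>) J ` P \<subseteq> (+>) J ` m" using Pm by (rule image_mono)
    have s2: "(+>) J ` P \<noteq> (+>) J ` m"
    proof
      assume "(+>) J ` P = (+>) J ` m"
      hence "\<Union> ((+>) J ` P) = \<Union> ((+>) J ` m)" by simp
      hence "P = m" unfolding UP Um .
      thus False using Pne by simp
    qed
    have "(+>) J ` P \<subset> (+>) J ` m" using s1 s2 by (rule psubsetI)
    hence ch: "\<forall>i<1. ?Q i \<subset> ?Q (Suc i)" by simp
    have ex: "\<exists>P :: nat \<Rightarrow> 'a set set.
      (\<forall>i\<le>1. primeideal (P i) (R Quot J)) \<and> (\<forall>i<1. P i \<subset> P (Suc i))"
      using pr ch by (intro exI[of _ ?Q] conjI allI impI) auto
    have "ereal (real 1) \<in> {ereal (real n) | n. \<exists>P :: nat \<Rightarrow> 'a set set.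
      (\<forall>i\<le>n. primeideal (P i) (R Quot J)) \<and> (\<forall>i<n. P i \<subset> P (Suc i))}"
      unfolding mem_Collect_eq by (rule exI[of _ "1::nat"], rule conjI[OF refl ex])
    hence "ereal (real 1) \<le> krull_dim (R Quot J)" unfolding krull_dim_def by (rule Sup_upper)
    thus False using d0 by simp
  qed
qed

lemma part1:
  fixes R (structure)
  assumes noeth: "noetherian_ring R" and loc: "local_ring R m" and I: "ideal I R" and J: "ideal J R"
    and nsub: "\<not> ideal_prod R J m \<subseteq> ideal_prod R I m"
  shows "burch_ideal R m (I <+>\<^bsub>R\<^esub> ideal_prod R J m)"
proof -
  interpret cring R using loc unfolding local_ring_def by blast
  interpret m: maximalideal m R using loc unfolding local_ring_def by blast
  have mid: "ideal m R" by (rule m.is_ideal)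
  let ?Jm = "ideal_prod R J m"
  let ?Im = "ideal_prod R I m"
  let ?L = "I <+>\<^bsub>R\<^esub> ?Jm"
  have Jmid: "ideal ?Jm R" using ideal_prod_is_ideal[OF J mid] .
  have Imid: "ideal ?Im R" using ideal_prod_is_ideal[OF I mid] .
  have Lid: "ideal ?L R" using add_ideals[OF I Jmid] .
  have JmL: "?Jm \<subseteq> ?L" using set_add_right_sub[OF ring_axioms I Jmid] .
  show ?thesis unfolding burch_ideal_def
  proof
    assume eq: "ideal_colon R (ideal_prod R ?L m) m = ideal_colon R ?L m"
    have Jc: "J \<subseteq> ideal_colon R (ideal_prod R ?L m) m"
    proof
      fix j assume j: "j \<in> J"
      have "\<forall>b\<in>m. j \<otimes> b \<in> ?L" using ideal_prod.prod[OF j, of _ m R] JmL by blast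
      hence "j \<in> ideal_colon R ?L m" unfolding ideal_colon_def using ideal.Icarr[OF J j] by blast
      thus "j \<in> ideal_colon R (ideal_prod R ?L m) m" using eq by simp
    qed
    have JmLm: "?Jm \<subseteq> ideal_prod R ?L m"
    proof
      fix y assume "y \<in> ?Jm"
      thus "y \<in> ideal_prod R ?L m"
      proof (induct rule: ideal_prod.induct)
        case (prod i j)
        thus ?case using Jc unfolding ideal_colon_def by blast
      next
        case (sum s1 s2)
        thus ?case by (intro ideal_prod.sum)
      qed
    qed
    have "ideal_prod R ?L m = ideal_prod R m ?L" using ideal_prod_commute[OF Lid mid] .
    also have "\<dots> = ideal_prod R m I <+>\<^bsub>R\<^esub> ideal_prod R m ?Jm"
      using ideal_prod_r_distr[OF mid I Jmid] .
    also have "\<dots> = ?Im <+>\<^bsub>R\<^esub> ideal_prod R ?Jm m"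
      using ideal_prod_commute[OF mid I] ideal_prod_commute[OF mid Jmid] by simp
    finally have "?Jm \<subseteq> ?Im <+>\<^bsub>R\<^esub> ideal_prod R ?Jm m" using JmLm by simp
    hence "?Jm \<subseteq> ?Im" by (rule nakayama_local[OF noeth loc Imid Jmid])
    thus False using nsub by simp
  qed
qed

lemma part2:
  fixes R (structure)
  assumes noeth: "noetherian_ring R" and loc: "local_ring R m" and I: "ideal I R" and J: "ideal J R"
    and dI: "krull_dim (R Quot I) > 0" and dJ: "krull_dim (R Quot J) = 0"
  shows "\<not> ideal_prod R J m \<subseteq> ideal_prod R I m"
proof
  assume JmIm: "ideal_prod R J m \<subseteq> ideal_prod R I m"
  interpret cring R using loc unfolding local_ring_def by blast
  have all: "P = m" if "primeideal P R" "I \<subseteq> P" for P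
    using primes_over_I_eq_m[OF noeth loc I J JmIm dJ that] .
  have "\<exists>y\<in>{ereal (real n) | n. \<exists>P :: nat \<Rightarrow> 'a set set.
      (\<forall>i\<le>n. primeideal (P i) (R Quot I)) \<and> (\<forall>i<n. P i \<subset> P (Suc i))}. 0 < y"
    using dI unfolding krull_dim_def less_Sup_iff .
  then obtain y where y: "y \<in> {ereal (real n) | n. \<exists>P :: nat \<Rightarrow> 'a set set.
      (\<forall>i\<le>n. primeideal (P i) (R Quot I)) \<and> (\<forall>i<n. P i \<subset> P (Suc i))}" and y0: "0 < y"
    by (rule bexE)
  from y obtain n where yn: "y = ereal (real n)" and
    "\<exists>P :: nat \<Rightarrow> 'a set set. (\<forall>i\<le>n. primeideal (P i) (R Quot I)) \<and> (\<forall>i<n. P i \<subset> P (Suc i))"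
    unfolding mem_Collect_eq by (elim exE conjE) (rule that, assumption, blast)
  then obtain P :: "nat \<Rightarrow> 'a set set" where
    Pp: "\<forall>i\<le>n. primeideal (P i) (R Quot I)" and Pc: "\<forall>i<n. P i \<subset> P (Suc i)" by (elim exE conjE)
  have n: "0 < n" using y0 yn by simp
  have p0: "primeideal (P 0) (R Quot I)" using Pp by simp
  have p1: "primeideal (P (Suc 0)) (R Quot I)" using Pp n by simp
  have st: "P 0 \<subset> P (Suc 0)" using Pc n by simp
  have P1c: "P (Suc 0) \<subseteq> carrier (R Quot I)"
    using p1 primeideal.axioms(1) ideal.axioms(1) additive_subgroup.a_subset by blast
  have "{r \<in> carrier R. I +> r \<in> P 0} = m"
    by (rule all[OF prime_vimage[OF is_cring I p0]])
  moreover have "{r \<in> carrier R. I +> r \<in> P (Suc 0)} = m"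
    by (rule all[OF prime_vimage[OF is_cring I p1]])
  ultimately show False using vimage_strict[OF I st P1c] by simp
qed

theorem proposition3p7:
  fixes R :: "('a, 'b) ring_scheme" and m I J :: "'a set"
  assumes "noetherian_ring R"
    and "local_ring R m"
    and "ideal I R" and "ideal J R"
  shows "(\<not> ideal_prod R J m \<subseteq> ideal_prod R I m \<longrightarrow>
            burch_ideal R m (I <+>\<^bsub>R\<^esub> ideal_prod R J m))
       \<and> (krull_dim (R Quot I) > 0 \<and> krull_dim (R Quot J) = 0 \<longrightarrow>
            burch_ideal R m (I <+>\<^bsub>R\<^esub> ideal_prod R J m))"
proof (intro conjI impI)
  assume "\<not> ideal_prod R J m \<subseteq> ideal_prod R I m"
  thus "burch_ideal R m (I <+>\<^bsub>R\<^esub> ideal_prod R J m)" by (rule part1[OF assms])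
next
  assume "krull_dim (R Quot I) > 0 \<and> krull_dim (R Quot J) = 0"
  hence "\<not> ideal_prod R J m \<subseteq> ideal_prod R I m" using part2[OF assms] by blast
  thus "burch_ideal R m (I <+>\<^bsub>R\<^esub> ideal_prod R J m)" by (rule part1[OF assms])
qed

end
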